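(* The step relation of algorithm BFS under the unfair daemon, $\mathrm{Step}=\mathrm{Step}^{(r)}\cup\mathrm{Step}^{(d)}\cup\mathrm{Step}^{(p)}$, is well-founded: from every initial configuration, every sequence of steps is finite (i.e. every execution reaches a terminal configuration, one in which no node is enabled).
   Context: Let $G$ be a finite, connected, undirected graph with node set $V$ and a distinguished node $r$ (the root). Each node $p$ has a fixed ordered list $N(p)$ of its neighbours. A configuration $\gamma$ assigns to each node $p$ a value $\gamma.p.d\in\mathbb N$ (unbounded) and a neighbour $\gamma.p.par\in N(p)$. For a non-root node $p$ let $Dist_p(\gamma)=\min\{\gamma.q.d+1 : q\in N(p)\}$. Algorithm BFS (Dolev et al.) has the following actions. Root: enabled iff $\gamma.r.d\neq 0$; executing it sets $r.d:=0$. Non-root $p$, action CD: enabled iff $\gamma.p.d\ne Dist_p(\gamma)$; executing sets $p.d:=Dist_p(\gamma)$. Non-root $p$, action CP: enabled iff $\gamma.p.d=Dist_p(\gamma)$ and $\gamma.q_0.d+1\neq\gamma.p.d$ where $q_0=\gamma.p.par$; executing sets $p.par$ to the first $q$ in $N(p)$ with $\gamma.q.d+1=\gamma.p.d$. A node is enabled if one of its actions is enabled. A step $\gamma\to\gamma'$ (relation $\mathrm{Step}$, unfair daemon) holds iff there is a nonempty set $S$ of nodes enabled in $\gamma$ such that $\gamma'$ is obtained by every $p\in S$ simultaneously executing its enabled action (evaluated in $\gamma$), all other nodes unchanged. $\mathrm{Step}^{(r)}$: steps with $\gamma.r.d\ne\gamma'.r.d$. $\mathrm{Step}^{(d)}$: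 steps with $\gamma.r.d=\gamma'.r.d$ and $\gamma.p.d\ne\gamma'.p.d$ for some $p$. $\mathrm{Step}^{(p)}$: steps with $\gamma.p.d=\gamma'.p.d$ for all $p$. A relation is well-founded if it admits no infinite forward chain. *)

theory Defs
  imports Main
begin

text \<open>Graph: node set V, root r, ordered neighbour lists N.
  A configuration is a pair (d, par) of functions on nodes.\<close>

type_synonym 'v config = "('v \<Rightarrow> nat) \<times> ('v \<Rightarrow> 'v)"

definition bfs_graph :: "'v set \<Rightarrow> 'v \<Rightarrow> ('v \<Rightarrow> 'v list) \<Rightarrow> bool" where
  "bfs_graph V r N \<longleftrightarrow>
     finite V \<and> r \<in> V \<and>
     (\<forall>p\<in>V. distinct (N p) \<and> p \<notin> set (N p) \<and> set (N p) \<subseteq> V) \<and>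
     (\<forall>p\<in>V. \<forall>q\<in>V. q \<in> set (N p) \<longleftrightarrow> p \<in> set (N q)) \<and>
     (\<forall>p\<in>V. (r, p) \<in> {(x, y). x \<in> V \<and> y \<in> set (N x)}\<^sup>*)"

definition valid_config :: "'v set \<Rightarrow> ('v \<Rightarrow> 'v list) \<Rightarrow> 'v config \<Rightarrow> bool" where
  "valid_config V N \<gamma> \<longleftrightarrow> (\<forall>p\<in>V. snd \<gamma> p \<in> set (N p))"

definition Dist :: "('v \<Rightarrow> 'v list) \<Rightarrow> 'v config \<Rightarrow> 'v \<Rightarrow> nat" where
  "Dist N \<gamma> p = Min {fst \<gamma> q + 1 | q. q \<in> set (N p)}"

definition root_enabled :: "'v config \<Rightarrow> 'v \<Rightarrow> bool" where
  "root_enabled \<gamma> r \<longleftrightarrow> fst \<gamma> r \<noteq> 0"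

definition CD_enabled :: "('v \<Rightarrow> 'v list) \<Rightarrow> 'v config \<Rightarrow> 'v \<Rightarrow> bool" where
  "CD_enabled N \<gamma> p \<longleftrightarrow> fst \<gamma> p \<noteq> Dist N \<gamma> p"

definition CP_enabled :: "('v \<Rightarrow> 'v list) \<Rightarrow> 'v config \<Rightarrow> 'v \<Rightarrow> bool" where
  "CP_enabled N \<gamma> p \<longleftrightarrow> fst \<gamma> p = Dist N \<gamma> p \<and> fst \<gamma> (snd \<gamma> p) + 1 \<noteq> fst \<gamma> p"

definition enabled :: "'v \<Rightarrow> ('v \<Rightarrow> 'v list) \<Rightarrow> 'v config \<Rightarrow> 'v \<Rightarrow> bool" where
  "enabled r N \<gamma> p \<longleftrightarrow>
     (if p = r then root_enabled \<gamma> r else CD_enabled N \<gamma> p \<or> CP_enabled N \<gamma> p)"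

definition new_d :: "'v \<Rightarrow> ('v \<Rightarrow> 'v list) \<Rightarrow> 'v config \<Rightarrow> 'v \<Rightarrow> nat" where
  "new_d r N \<gamma> p =
     (if p = r then 0 else if CD_enabled N \<gamma> p then Dist N \<gamma> p else fst \<gamma> p)"

definition new_par :: "'v \<Rightarrow> ('v \<Rightarrow> 'v list) \<Rightarrow> 'v config \<Rightarrow> 'v \<Rightarrow> 'v" where
  "new_par r N \<gamma> p =
     (if p \<noteq> r \<and> CP_enabled N \<gamma> p
      then the (find (\<lambda>q. fst \<gamma> q + 1 = fst \<gamma> p) (N p))
      else snd \<gamma> p)"

definition Step :: "'v set \<Rightarrow> 'v \<Rightarrow> ('v \<Rightarrow> 'v list) \<Rightarrow> 'v config \<Rightarrow> 'v config \<Rightarrow> bool" where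
  "Step V r N \<gamma> \<gamma>' \<longleftrightarrow> valid_config V N \<gamma> \<and>
     (\<exists>S. S \<noteq> {} \<and> S \<subseteq> V \<and> (\<forall>p\<in>S. enabled r N \<gamma> p) \<and>
        \<gamma>' = ((\<lambda>p. if p \<in> S then new_d r N \<gamma> p else fst \<gamma> p),
              (\<lambda>p. if p \<in> S then new_par r N \<gamma> p else snd \<gamma> p)))"

definition Step_r :: "'v set \<Rightarrow> 'v \<Rightarrow> ('v \<Rightarrow> 'v list) \<Rightarrow> 'v config \<Rightarrow> 'v config \<Rightarrow> bool" where
  "Step_r V r N \<gamma> \<gamma>' \<longleftrightarrow> Step V r N \<gamma> \<gamma>' \<and> fst \<gamma> r \<noteq> fst \<gamma>' r"

definition Step_d :: "'v set \<Rightarrow> 'v \<Rightarrow> ('v \<Rightarrow> 'v list) \<Rightarrow> 'v config \<Rightarrow> 'v config \<Rightarrow> bool" where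
  "Step_d V r N \<gamma> \<gamma>' \<longleftrightarrow> Step V r N \<gamma> \<gamma>' \<and> fst \<gamma> r = fst \<gamma>' r \<and>
     (\<exists>p\<in>V. fst \<gamma> p \<noteq> fst \<gamma>' p)"

definition Step_p :: "'v set \<Rightarrow> 'v \<Rightarrow> ('v \<Rightarrow> 'v list) \<Rightarrow> 'v config \<Rightarrow> 'v config \<Rightarrow> bool" where
  "Step_p V r N \<gamma> \<gamma>' \<longleftrightarrow> Step V r N \<gamma> \<gamma>' \<and> (\<forall>p\<in>V. fst \<gamma> p = fst \<gamma>' p)"

end

theory Submission
  imports Defs
begin

lemma nbr_V: "bfs_graph V r N \<Longrightarrow> p \<in> V \<Longrightarrow> q \<in> set (N p) \<Longrightarrow> q \<in> V"
  unfolding bfs_graph_def by blast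

lemma nbr_sym: "bfs_graph V r N \<Longrightarrow> p \<in> V \<Longrightarrow> q \<in> V \<Longrightarrow> p \<in> set (N q) \<Longrightarrow> q \<in> set (N p)"
  unfolding bfs_graph_def by blast

lemma nbr_nonempty:
  assumes G: "bfs_graph V r N" and p: "p \<in> V" "p \<noteq> r"
  shows "N p \<noteq> []"
proof -
  let ?E = "{(x, y). x \<in> V \<and> y \<in> set (N x)}"
  have "(r, p) \<in> ?E\<^sup>*" using G p unfolding bfs_graph_def by blast
  then obtain x where "(x, p) \<in> ?E" using p(2) by (cases rule: rtranclE) auto
  hence "x \<in> V" "p \<in> set (N x)" by auto
  hence "x \<in> set (N p)" using nbr_sym[OF G p(1)] by blast
  thus ?thesis by auto
qed

lemma fin_set: "finite {fst \<gamma> q + 1 | q. q \<in> set (N p)}"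
proof -
  have "{fst \<gamma> q + 1 | q. q \<in> set (N p)} = (\<lambda>q. fst \<gamma> q + 1) ` set (N p)" by auto
  thus ?thesis by simp
qed

lemma Dist_le: "q \<in> set (N p) \<Longrightarrow> Dist N \<gamma> p \<le> fst \<gamma> q + 1"
  unfolding Dist_def by (rule Min_le[OF fin_set]) auto

lemma Dist_ex: "N p \<noteq> [] \<Longrightarrow> \<exists>q\<in>set (N p). Dist N \<gamma> p = fst \<gamma> q + 1"
proof -
  assume "N p \<noteq> []"
  hence ne: "{fst \<gamma> q + 1 | q. q \<in> set (N p)} \<noteq> {}" by (cases "N p") auto
  have "Dist N \<gamma> p \<in> {fst \<gamma> q + 1 | q. q \<in> set (N p)}"
    unfolding Dist_def by (rule Min_in[OF fin_set[of \<gamma> N p] ne])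
  thus ?thesis by auto
qed

lemma Dist_cong: "(\<And>q. q \<in> set (N p) \<Longrightarrow> fst \<gamma> q = fst \<gamma>' q) \<Longrightarrow> Dist N \<gamma> p = Dist N \<gamma>' p"
proof -
  assume h: "\<And>q. q \<in> set (N p) \<Longrightarrow> fst \<gamma> q = fst \<gamma>' q"
  have "{fst \<gamma> q + 1 | q. q \<in> set (N p)} = {fst \<gamma>' q + 1 | q. q \<in> set (N p)}"
    using h by (metis (no_types, lifting))
  thus ?thesis unfolding Dist_def by simp
qed

lemma step_d:
  assumes "Step V r N \<gamma> \<gamma>'" "fst \<gamma>' p \<noteq> fst \<gamma> p"
  shows "p \<in> V \<and> ((p = r \<and> fst \<gamma>' p = 0) \<or> (p \<noteq> r \<and> fst \<gamma>' p = Dist N \<gamma> p))"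
proof -
  from assms(1) obtain S where S: "S \<subseteq> V"
    "\<gamma>' = ((\<lambda>p. if p \<in> S then new_d r N \<gamma> p else fst \<gamma> p),
              (\<lambda>p. if p \<in> S then new_par r N \<gamma> p else snd \<gamma> p))"
    unfolding Step_def by blast
  show ?thesis using assms(2) S by (auto simp: new_d_def split: if_splits)
qed

locale bfs_exec =
  fixes V :: "'v set" and r :: 'v and N :: "'v \<Rightarrow> 'v list" and f :: "nat \<Rightarrow> 'v config"
  assumes G: "bfs_graph V r N" and F: "\<And>i. Step V r N (f i) (f (Suc i))"
begin

abbreviation d where "d i p \<equiv> fst (f i) p"

lemma chg: "d (Suc t) p \<noteq> d t p \<Longrightarrow>
   p \<in> V \<and> ((p = r \<and> d (Suc t) p = 0) \<or> (p \<noteq> r \<and> d (Suc t) p = Dist N (f t) p))"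
  using step_d[OF F, of t p] by simp

lemma finV: "finite V" and rV: "r \<in> V" using G unfolding bfs_graph_def by auto

definition frz :: "nat \<Rightarrow> nat \<Rightarrow> bool" where
  "frz v T \<longleftrightarrow> (\<forall>t\<ge>T. \<forall>p\<in>V. (d t p < v \<longleftrightarrow> d T p < v) \<and> (d T p < v \<longrightarrow> d t p = d T p))"

lemma frz0: "frz 0 0" unfolding frz_def by simp

lemma frzD: "frz v T0 \<Longrightarrow> T0 \<le> t \<Longrightarrow> T0 \<le> t' \<Longrightarrow> p \<in> V \<Longrightarrow>
   (d t p < v \<longleftrightarrow> d t' p < v) \<and> (d t p < v \<longrightarrow> d t' p = d t p)"
proof -
  assume a: "frz v T0" "T0 \<le> t" "T0 \<le> t'" "p \<in> V"
  have "(d t p < v \<longleftrightarrow> d T0 p < v) \<and> (d T0 p < v \<longrightarrow> d t p = d T0 p)"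
    using a unfolding frz_def by blast
  moreover have "(d t' p < v \<longleftrightarrow> d T0 p < v) \<and> (d T0 p < v \<longrightarrow> d t' p = d T0 p)"
    using a unfolding frz_def by blast
  ultimately show ?thesis by auto
qed

lemma root_stay: assumes "d t r = 0" "t \<le> t'" shows "d t' r = 0"
  using assms(2)
proof (induction t' rule: dec_induct)
  case (step n)
  then show ?case using chg[of n r] by auto
qed (use assms in simp)

lemma join_stay:
  assumes fz: "frz v T0" and t: "T0 \<le> t" and p: "p \<in> V" and a: "d t p \<noteq> v" "d (Suc t) p = v"
  shows "\<forall>t'\<ge>Suc t. d t' p = v"
proof -
  have c: "p = r \<and> d (Suc t) p = 0 \<or> p \<noteq> r \<and> d (Suc t) p = Dist N (f t) p"
    using chg[of t p] a by auto
  show ?thesis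
  proof (cases "p = r")
    case True
    then show ?thesis using c a root_stay[of "Suc t"] by auto
  next
    case False
    hence Dv: "Dist N (f t) p = v" using c a by auto
    obtain q where q: "q \<in> set (N p)" "Dist N (f t) p = d t q + 1"
      using Dist_ex[of N p "f t", OF nbr_nonempty[OF G p False]] by blast
    have qV: "q \<in> V" using nbr_V[OF G p q(1)] .
    have qv: "d t q < v" using q Dv by simp
    have qfix: "d t' q = d t q" if "t \<le> t'" for t'
    proof -
      have "T0 \<le> t'" using t that by simp
      from frzD[OF fz t this qV] qv show ?thesis by simp
    qed
    show ?thesis
    proof (intro allI impI)
      fix t' assume "Suc t \<le> t'"
      thus "d t' p = v"
      proof (induction t' rule: dec_induct)
        case base then show ?case using a by simp
      next
        case (step n)
        show ?case
        proof (rule ccontr)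
          assume ne: "d (Suc n) p \<noteq> v"
          hence ne2: "d (Suc n) p \<noteq> d n p" using step by simp
          hence "d (Suc n) p = Dist N (f n) p" using chg[of n p] False by auto
          also have "\<dots> \<le> d n q + 1" by (rule Dist_le[of q N p "f n", OF q(1)])
          also have "\<dots> = v" using qfix[of n] step q Dv by simp
          finally have "d (Suc n) p < v" using ne by simp
          moreover have "\<not> d n p < v" using step by simp
          moreover have h1: "T0 \<le> n" using step t by simp
          moreover have h2: "T0 \<le> Suc n" using step t by simp
          moreover have "d n p < v \<longleftrightarrow> d (Suc n) p < v" using frzD[OF fz h1 h2 p] by (rule conjunct1)
          ultimately show False by blast
        qed
      qed
    qed
  qed
qed

lemma nojoin:
  assumes "\<forall>t\<ge>T0. \<not> (d t p \<noteq> v \<and> d (Suc t) p = v)" "T0 \<le> t" "d t p \<noteq> v"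
  shows "\<forall>t'\<ge>t. d t' p \<noteq> v"
proof (intro allI impI)
  fix t' assume "t \<le> t'"
  thus "d t' p \<noteq> v"
  proof (induction t' rule: dec_induct)
    case base then show ?case using assms by simp
  next
    case (step n)
    have "T0 \<le> n" using step assms(2) by simp
    hence "\<not> (d n p \<noteq> v \<and> d (Suc n) p = v)" using assms(1) by blast
    then show ?case using step by blast
  qed
qed

lemma node_stab:
  assumes fz: "frz v T0" and p: "p \<in> V"
  shows "\<exists>Tp\<ge>T0. \<forall>t\<ge>Tp. (d t p = v \<longleftrightarrow> d Tp p = v)"
proof (cases "\<exists>t\<ge>T0. d t p \<noteq> v \<and> d (Suc t) p = v")
  case True
  then obtain t where t: "t \<ge> T0" "d t p \<noteq> v" "d (Suc t) p = v" by blast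
  have J: "\<forall>t'\<ge>Suc t. d t' p = v" by (rule join_stay[OF fz t(1) p t(2,3)])
  show ?thesis
  proof (intro exI[of _ "Suc t"] conjI allI impI)
    show "T0 \<le> Suc t" using t(1) by simp
    fix t' assume "Suc t \<le> t'"
    with J have "d t' p = v" by blast
    with t(3) show "d t' p = v \<longleftrightarrow> d (Suc t) p = v" by simp
  qed
next
  case nj: False
  show ?thesis
  proof (cases "\<exists>t\<ge>T0. d t p \<noteq> v")
    case True
    then obtain t where t: "t \<ge> T0" "d t p \<noteq> v" by blast
    have J: "\<forall>t'\<ge>t. d t' p \<noteq> v" by (rule nojoin[OF _ t(1,2)]) (use nj in blast)
    show ?thesis
    proof (intro exI[of _ t] conjI allI impI)
      show "T0 \<le> t" using t(1) by simp
      fix t' assume "t \<le> t'"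
      with J have "d t' p \<noteq> v" by blast
      with t(2) show "d t' p = v \<longleftrightarrow> d t p = v" by simp
    qed
  next
    case False
    hence J: "\<forall>t'\<ge>T0. d t' p = v" by blast
    show ?thesis
    proof (intro exI[of _ T0] conjI allI impI)
      show "T0 \<le> T0" by simp
      fix t' assume "T0 \<le> t'"
      with J have "d t' p = v" by blast
      moreover have "d T0 p = v" using J by blast
      ultimately show "d t' p = v \<longleftrightarrow> d T0 p = v" by simp
    qed
  qed
qed

lemma frz_step:
  assumes fz: "frz v T0"
  shows "\<exists>T. frz (Suc v) T"
proof -
  have ex: "\<forall>p\<in>V. \<exists>Tp. Tp \<ge> T0 \<and> (\<forall>t\<ge>Tp. (d t p = v \<longleftrightarrow> d Tp p = v))" using node_stab[OF fz] by blast
  obtain Tp where Tp0: "\<forall>p\<in>V. Tp p \<ge> T0 \<and> (\<forall>t\<ge>Tp p. (d t p = v \<longleftrightarrow> d (Tp p) p = v))"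
    using bchoice[OF ex] by blast
  hence Tp: "\<And>p t. p \<in> V \<Longrightarrow> Tp p \<le> t \<Longrightarrow> (d t p = v \<longleftrightarrow> d (Tp p) p = v)" by blast
  define T where "T = Max (insert T0 (Tp ` V))"
  have fin: "finite (insert T0 (Tp ` V))" using finV by simp
  have T0T: "T0 \<le> T" unfolding T_def by (rule Max_ge[OF fin]) simp
  have TpT: "Tp p \<le> T" if "p \<in> V" for p unfolding T_def by (rule Max_ge[OF fin]) (use that in simp)
  have eqv: "\<And>p t. p \<in> V \<Longrightarrow> T \<le> t \<Longrightarrow> (d t p = v \<longleftrightarrow> d T p = v)"
  proof -
    fix p t assume p: "p \<in> V" and t: "T \<le> t"
    have "Tp p \<le> t" using TpT[OF p] t by simp
    hence "d t p = v \<longleftrightarrow> d (Tp p) p = v" by (rule Tp[OF p])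
    moreover have "d T p = v \<longleftrightarrow> d (Tp p) p = v" by (rule Tp[OF p TpT[OF p]])
    ultimately show "d t p = v \<longleftrightarrow> d T p = v" by simp
  qed
  show ?thesis unfolding frz_def
  proof (intro exI[of _ T] allI impI ballI)
    fix t p assume t: "T \<le> t" and p: "p \<in> V"
    have T0t: "T0 \<le> t" using T0T t by simp
    have A: "(d T p < v \<longleftrightarrow> d t p < v) \<and> (d T p < v \<longrightarrow> d t p = d T p)"
      by (rule frzD[OF fz T0T T0t p])
    have B: "d t p = v \<longleftrightarrow> d T p = v" using eqv p t by blast
    show "(d t p < Suc v \<longleftrightarrow> d T p < Suc v) \<and> (d T p < Suc v \<longrightarrow> d t p = d T p)"
    proof (cases "d T p < v")
      case True
      with A have "d t p = d T p" by blast
      thus ?thesis by simp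
    next
      case False
      with A have nt: "\<not> d t p < v" by blast
      show ?thesis
      proof (cases "d T p = v")
        case True
        with B have "d t p = v" by blast
        thus ?thesis using True by simp
      next
        case False
        with B have "d t p \<noteq> v" by blast
        thus ?thesis using False nt \<open>\<not> d T p < v\<close> by simp
      qed
    qed
  qed
qed

lemma frz_all: "\<exists>T. frz v T"
proof (induction v)
  case 0 then show ?case using frz0 by blast
next
  case (Suc v) then show ?case using frz_step by blast
qed


definition hh :: "'v \<Rightarrow> nat" where
  "hh p = (LEAST n. (r, p) \<in> {(x, y). x \<in> V \<and> y \<in> set (N x)} ^^ n)"

lemma h_dec:
  assumes p: "p \<in> V" "p \<noteq> r"
  shows "\<exists>q\<in>set (N p). hh q < hh p"
proof -
  let ?E = "{(x, y). x \<in> V \<and> y \<in> set (N x)}"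
  have "(r, p) \<in> ?E\<^sup>*" using G p unfolding bfs_graph_def by blast
  then obtain n where "(r, p) \<in> ?E ^^ n" using rtrancl_power by blast
  hence hp: "(r, p) \<in> ?E ^^ hh p" unfolding hh_def by (rule LeastI)
  have "hh p \<noteq> 0" using hp p(2) by (cases "hh p") auto
  then obtain k where k: "hh p = Suc k" by (cases "hh p") auto
  from hp k obtain x where x: "(r, x) \<in> ?E ^^ k" "(x, p) \<in> ?E" by (auto elim: relpow_Suc_E)
  have "hh x \<le> k" unfolding hh_def by (rule Least_le) (rule x(1))
  moreover have "x \<in> set (N p)" using x(2) nbr_sym[OF G p(1)] by blast
  ultimately show ?thesis using k by force
qed

definition M0 where "M0 = Max (d 0 ` V)"

lemma bound: "p \<in> V \<Longrightarrow> d t p \<le> M0 + hh p"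
proof (induction t arbitrary: p)
  case 0
  have "d 0 p \<le> M0" unfolding M0_def using finV 0 by simp
  then show ?case by simp
next
  case (Suc t)
  show ?case
  proof (cases "d (Suc t) p = d t p")
    case True then show ?thesis using Suc by simp
  next
    case False
    from chg[OF False] have c: "p = r \<and> d (Suc t) p = 0 \<or> p \<noteq> r \<and> d (Suc t) p = Dist N (f t) p" by (rule conjunct2)
    show ?thesis
    proof (cases "p = r")
      case True then show ?thesis using c by simp
    next
      case nr: False
      obtain q where q: "q \<in> set (N p)" "hh q < hh p" using h_dec[OF Suc.prems nr] by blast
      have qV: "q \<in> V" using nbr_V[OF G Suc.prems q(1)] .
      have "d (Suc t) p = Dist N (f t) p" using c nr by simp
      also have "\<dots> \<le> d t q + 1" by (rule Dist_le[of q N p "f t", OF q(1)])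
      also have "\<dots> \<le> M0 + hh q + 1" using Suc.IH[OF qV] by simp
      also have "\<dots> \<le> M0 + hh p" using q(2) by simp
      finally show ?thesis .
    qed
  qed
qed

definition K where "K = M0 + Max (hh ` V)"

lemma boundK: "p \<in> V \<Longrightarrow> d t p < Suc K"
proof -
  assume p: "p \<in> V"
  have "hh p \<le> Max (hh ` V)" using finV p by simp
  thus ?thesis using bound[OF p, of t] unfolding K_def by simp
qed

lemma eventually_const: "\<exists>T. \<forall>t\<ge>T. \<forall>p\<in>V. d t p = d T p"
proof -
  obtain T where T: "frz (Suc K) T" using frz_all by blast
  show ?thesis
  proof (intro exI[of _ T] allI impI ballI)
    fix t p assume t: "T \<le> t" and p: "p \<in> V"
    have "d T p < Suc K \<longrightarrow> d t p = d T p" using T t p unfolding frz_def by blast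
    thus "d t p = d T p" using boundK[OF p] by blast
  qed
qed

definition C where "C t = {p \<in> V. p \<noteq> r \<and> CP_enabled N (f t) p}"

lemma find_prop: "List.find P xs = Some x \<Longrightarrow> P x \<and> x \<in> set xs"
  unfolding find_Some_iff by auto

lemma psub:
  assumes same: "\<forall>p\<in>V. d (Suc t) p = d t p"
  shows "C (Suc t) \<subset> C t"
proof -
  from F[of t] obtain S where vc: "valid_config V N (f t)" and S: "S \<noteq> {}" "S \<subseteq> V"
    "\<forall>p\<in>S. enabled r N (f t) p" and
    eq: "f (Suc t) = ((\<lambda>p. if p \<in> S then new_d r N (f t) p else fst (f t) p),
              (\<lambda>p. if p \<in> S then new_par r N (f t) p else snd (f t) p))"
    unfolding Step_def by blast
  have fst_eq: "\<And>p. fst (f (Suc t)) p = (if p \<in> S then new_d r N (f t) p else fst (f t) p)"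
    using eq by simp
  have snd_eq: "\<And>p. snd (f (Suc t)) p = (if p \<in> S then new_par r N (f t) p else snd (f t) p)"
    using eq by simp
  have Dsame: "Dist N (f (Suc t)) p = Dist N (f t) p" if "p \<in> V" for p
    by (rule Dist_cong) (use same nbr_V[OF G that] in blast)
  have inS: "p \<in> C t" if pS: "p \<in> S" for p
  proof -
    have pV: "p \<in> V" using pS S(2) by blast
    have en: "enabled r N (f t) p" using pS S(3) by blast
    show ?thesis
    proof (cases "p = r")
      case True
      hence "d t r \<noteq> 0" using en unfolding enabled_def root_enabled_def by simp
      moreover have "d (Suc t) r = 0" using fst_eq[of r] pS True unfolding new_d_def by simp
      ultimately show ?thesis using same pV True by simp
    next
      case False
      have "\<not> CD_enabled N (f t) p"
      proof
        assume cd: "CD_enabled N (f t) p"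
        hence "d (Suc t) p = Dist N (f t) p" using fst_eq[of p] pS False unfolding new_d_def by simp
        thus False using cd same pV unfolding CD_enabled_def by simp
      qed
      hence "CP_enabled N (f t) p" using en False unfolding enabled_def by simp
      thus ?thesis unfolding C_def using pV False by simp
    qed
  qed
  have notC: "p \<notin> C (Suc t)" if pS: "p \<in> S" for p
  proof -
    have pV: "p \<in> V" using pS S(2) by blast
    have pC: "p \<in> C t" by (rule inS[OF pS])
    hence nr: "p \<noteq> r" and cp: "CP_enabled N (f t) p" unfolding C_def by auto
    have dp: "d t p = Dist N (f t) p" using cp unfolding CP_enabled_def by simp
    obtain q where q: "q \<in> set (N p)" "Dist N (f t) p = d t q + 1"
      using Dist_ex[of N p "f t", OF nbr_nonempty[OF G pV nr]] by blast
    have "List.find (\<lambda>q. d t q + 1 = d t p) (N p) \<noteq> None"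
      unfolding find_None_iff using q dp by auto
    then obtain x where x: "List.find (\<lambda>q. d t q + 1 = d t p) (N p) = Some x" by blast
    from find_prop[OF x] have xp: "d t x + 1 = d t p" "x \<in> set (N p)" by auto
    have xV: "x \<in> V" using nbr_V[OF G pV xp(2)] .
    have "snd (f (Suc t)) p = x" using snd_eq[of p] pS nr cp x unfolding new_par_def by simp
    hence "d (Suc t) (snd (f (Suc t)) p) + 1 = d (Suc t) p"
      using same xV pV xp(1) by simp
    thus ?thesis unfolding C_def CP_enabled_def by simp
  qed
  have sub: "p \<in> C t" if pC: "p \<in> C (Suc t)" for p
  proof (cases "p \<in> S")
    case True thus ?thesis by (rule inS)
  next
    case False
    have pV: "p \<in> V" and nr: "p \<noteq> r" and cp: "CP_enabled N (f (Suc t)) p" using pC unfolding C_def by auto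
    have par: "snd (f (Suc t)) p = snd (f t) p" using snd_eq[of p] False by simp
    have q0: "snd (f t) p \<in> V" using vc pV nbr_V[OF G pV] unfolding valid_config_def by blast
    have "CP_enabled N (f t) p"
      using cp unfolding CP_enabled_def par Dsame[OF pV] using same pV q0 by simp
    thus ?thesis unfolding C_def using pV nr by simp
  qed
  obtain p where pS: "p \<in> S" using S(1) by blast
  show ?thesis using sub inS[OF pS] notC[OF pS] by blast
qed

lemma no_exec: False
proof -
  obtain T where T: "\<forall>t\<ge>T. \<forall>p\<in>V. d t p = d T p" using eventually_const by blast
  have finC: "finite (C t)" for t unfolding C_def using finV by simp
  have dec: "card (C (T + k)) + k \<le> card (C T)" for k
  proof (induction k)
    case 0 then show ?case by simp
  next
    case (Suc k)
    have "\<forall>p\<in>V. d (Suc (T + k)) p = d (T + k) p"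
    proof
      fix p assume p: "p \<in> V"
      have "d (Suc (T + k)) p = d T p" using T p by (metis le_add1 le_SucI)
      moreover have "d (T + k) p = d T p" using T p by (metis le_add1)
      ultimately show "d (Suc (T + k)) p = d (T + k) p" by simp
    qed
    hence "C (Suc (T + k)) \<subset> C (T + k)" by (rule psub)
    hence "card (C (Suc (T + k))) < card (C (T + k))" using finC by (rule psubset_card_mono[rotated])
    then show ?case using Suc.IH by simp
  qed
  have "card (C T) \<le> card V" unfolding C_def using finV by (intro card_mono) auto
  moreover have "card (C (T + Suc (card V))) + Suc (card V) \<le> card (C T)" by (rule dec)
  ultimately show False by simp
qed

end

theorem theorem1:
  fixes V :: "'v set" and r :: 'v and N :: "'v \<Rightarrow> 'v list"
  assumes "bfs_graph V r N"
  shows "Step V r N = (\<lambda>\<gamma> \<gamma>'. Step_r V r N \<gamma> \<gamma>' \<or> Step_d V r N \<gamma> \<gamma>' \<or> Step_p V r N \<gamma> \<gamma>')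
         \<and> \<not> (\<exists>f :: nat \<Rightarrow> 'v config. \<forall>i. Step V r N (f i) (f (Suc i)))"
proof
  have rV: "r \<in> V" using assms unfolding bfs_graph_def by blast
  show "Step V r N = (\<lambda>\<gamma> \<gamma>'. Step_r V r N \<gamma> \<gamma>' \<or> Step_d V r N \<gamma> \<gamma>' \<or> Step_p V r N \<gamma> \<gamma>')"
    unfolding Step_r_def Step_d_def Step_p_def using rV by (intro ext) blast
  show "\<not> (\<exists>f :: nat \<Rightarrow> 'v config. \<forall>i. Step V r N (f i) (f (Suc i)))"
  proof
    assume "\<exists>f :: nat \<Rightarrow> 'v config. \<forall>i. Step V r N (f i) (f (Suc i))"
    then obtain f :: "nat \<Rightarrow> 'v config" where f: "\<forall>i. Step V r N (f i) (f (Suc i))" by blast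
    interpret bfs_exec V r N f using assms f by unfold_locales auto
    show False by (rule no_exec)
  qed
qed

end
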